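(* Up to equivalence, the first order Reed--Muller code $RM(1,5)$ is the unique binary $[32,6]$ linear code $B$ such that (i) $B$ is doubly even, (ii) $B$ contains the all-ones vector, and (iii) $B^\perp$ has minimum weight at least $4$.
   Context: A binary code is doubly even if all codeword weights are divisible by $4$. Two binary codes are equivalent if one is obtained from the other by a coordinate permutation. $RM(1,5)$ is the binary $[32,6]$ code generated by the all-ones vector and the five vectors of length $32$ given by the coordinate functions of $\mathbb{F}_2^5$; equivalently it has generator matrix with rows $1^{32}$, $1^{16}0^{16}$, $(1^80^8)^2$, $(1^40^4)^4$, $(1^20^2)^8$, $(10)^{16}$. Its weight enumerator is $1+62y^{16}+y^{32}$. *)

theory Defs
  imports Main "HOL-Combinatorics.Permutations"
begin

text \<open>Binary vectors of length n: functions nat => bool supported on the coordinates {..<n}.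
  Addition over GF(2) is pointwise exclusive or.\<close>

definition words :: "nat \<Rightarrow> (nat \<Rightarrow> bool) set" where
  "words n = {v. \<forall>i. n \<le> i \<longrightarrow> \<not> v i}"

definition zero_vec :: "nat \<Rightarrow> bool" where
  "zero_vec = (\<lambda>i. False)"

definition ones_vec :: "nat \<Rightarrow> nat \<Rightarrow> bool" where
  "ones_vec n = (\<lambda>i. i < n)"

definition vadd :: "(nat \<Rightarrow> bool) \<Rightarrow> (nat \<Rightarrow> bool) \<Rightarrow> nat \<Rightarrow> bool" where
  "vadd u v = (\<lambda>i. u i \<noteq> v i)"

definition weight :: "nat \<Rightarrow> (nat \<Rightarrow> bool) \<Rightarrow> nat" where
  "weight n v = card {i. i < n \<and> v i}"

definition inner_even :: "nat \<Rightarrow> (nat \<Rightarrow> bool) \<Rightarrow> (nat \<Rightarrow> bool) \<Rightarrow> bool" where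
  "inner_even n u v \<longleftrightarrow> even (card {i. i < n \<and> u i \<and> v i})"

definition linear_code :: "nat \<Rightarrow> (nat \<Rightarrow> bool) set \<Rightarrow> bool" where
  "linear_code n C \<longleftrightarrow> C \<subseteq> words n \<and> zero_vec \<in> C \<and> (\<forall>u\<in>C. \<forall>v\<in>C. vadd u v \<in> C)"

text \<open>A binary [n,k] linear code: a subspace of dimension k, i.e. with 2^k elements.\<close>
definition binary_code :: "nat \<Rightarrow> nat \<Rightarrow> (nat \<Rightarrow> bool) set \<Rightarrow> bool" where
  "binary_code n k C \<longleftrightarrow> linear_code n C \<and> card C = 2 ^ k"

definition dual_code :: "nat \<Rightarrow> (nat \<Rightarrow> bool) set \<Rightarrow> (nat \<Rightarrow> bool) set" where
  "dual_code n C = {v \<in> words n. \<forall>c\<in>C. inner_even n v c}"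

definition doubly_even :: "nat \<Rightarrow> (nat \<Rightarrow> bool) set \<Rightarrow> bool" where
  "doubly_even n C \<longleftrightarrow> (\<forall>c\<in>C. 4 dvd weight n c)"

definition min_weight_ge :: "nat \<Rightarrow> (nat \<Rightarrow> bool) set \<Rightarrow> nat \<Rightarrow> bool" where
  "min_weight_ge n C d \<longleftrightarrow> (\<forall>v\<in>C. v \<noteq> zero_vec \<longrightarrow> d \<le> weight n v)"

definition equiv_codes :: "nat \<Rightarrow> (nat \<Rightarrow> bool) set \<Rightarrow> (nat \<Rightarrow> bool) set \<Rightarrow> bool" where
  "equiv_codes n C D \<longleftrightarrow> (\<exists>\<sigma>. \<sigma> permutes {..<n} \<and> D = (\<lambda>v. v \<circ> \<sigma>) ` C)"

definition gf2_span :: "(nat \<Rightarrow> bool) set \<Rightarrow> (nat \<Rightarrow> bool) set" where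
  "gf2_span G = {v. \<exists>S\<subseteq>G. v = (\<lambda>i. odd (card {g\<in>S. g i}))}"

text \<open>Generator rows of RM(1,5): 1^32, and for m = 4,3,2,1,0 the row (1^(2^m) 0^(2^m))^(32/2^(m+1)),
  i.e. coordinate i (0-based) is 1 iff (i div 2^m) is even.\<close>
definition RM15_rows :: "(nat \<Rightarrow> bool) set" where
  "RM15_rows = insert (ones_vec 32) ((\<lambda>m. (\<lambda>i. i < 32 \<and> even (i div 2 ^ m))) ` {0..4})"

definition RM15 :: "(nat \<Rightarrow> bool) set" where
  "RM15 = gf2_span RM15_rows"

end

theory Submission
  imports Defs
begin

definition sumv :: "(nat \<Rightarrow> bool) set \<Rightarrow> nat \<Rightarrow> bool" where
  "sumv S = (\<lambda>i. odd (card {g\<in>S. g i}))"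

lemma span_eq: "gf2_span G = sumv ` Pow G"
  by (auto simp: gf2_span_def sumv_def)

lemma sumv_empty: "sumv {} = zero_vec"
  by (simp add: sumv_def zero_vec_def)

lemma sumv_single: "sumv {g} = g"
proof
  fix i
  have "{h\<in>{g}. h i} = (if g i then {g} else {})" by auto
  then show "sumv {g} i = g i" by (simp add: sumv_def)
qed

lemma sumv_insert: assumes "finite S" "g \<notin> S"
  shows "sumv (insert g S) = vadd g (sumv S)"
proof
  fix i
  have "{h\<in>insert g S. h i} = (if g i then insert g {h\<in>S. h i} else {h\<in>S. h i})"
    by auto
  then show "sumv (insert g S) i = vadd g (sumv S) i"
    using assms by (simp add: sumv_def vadd_def)
qed

lemma card_symdiff:
  assumes "finite A" "finite B"
  shows "card ((A - B) \<union> (B - A)) + 2 * card (A \<inter> B) = card A + card B"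
proof -
  have "card ((A - B) \<union> (B - A)) = card (A - B) + card (B - A)"
    by (rule card_Un_disjoint) (use assms in auto)
  moreover have "card ((A - B) \<union> (A \<inter> B)) = card (A - B) + card (A \<inter> B)"
    by (rule card_Un_disjoint) (use assms in auto)
  moreover have "card ((B - A) \<union> (A \<inter> B)) = card (B - A) + card (A \<inter> B)"
    by (rule card_Un_disjoint) (use assms in auto)
  moreover have "(A - B) \<union> (A \<inter> B) = A" "(B - A) \<union> (A \<inter> B) = B" by blast+
  ultimately show ?thesis by simp
qed

lemma par_aux: "(a::nat) + 2 * c = b + d \<Longrightarrow> odd a = (odd b \<noteq> odd d)" by presburger

lemma ev_aux: "(a::nat) + 2 * c = b + d \<Longrightarrow> even b \<Longrightarrow> even d \<Longrightarrow> even a" by presburger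
lemma dvd4_aux: "(a::nat) + 2 * c = b + d \<Longrightarrow> 4 dvd b \<Longrightarrow> 4 dvd d \<Longrightarrow> even c \<Longrightarrow> 4 dvd a"
proof -
  assume h: "a + 2 * c = b + d" "4 dvd b" "4 dvd d" "even c"
  then obtain x y z where "b = 4 * x" "d = 4 * y" "c = 2 * z" by (auto elim!: dvdE evenE)
  with h(1) have "a = 4 * (x + y - z)" by simp
  then show ?thesis by simp
qed

lemma sumv_symdiff: assumes "finite S" "finite T"
  shows "sumv ((S - T) \<union> (T - S)) = vadd (sumv S) (sumv T)"
proof
  fix i
  let ?A = "{g\<in>S. g i}" and ?B = "{g\<in>T. g i}"
  have e: "{g\<in>(S - T) \<union> (T - S). g i} = (?A - ?B) \<union> (?B - ?A)" by auto
  have "card ((?A - ?B) \<union> (?B - ?A)) + 2 * card (?A \<inter> ?B) = card ?A + card ?B"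
    by (rule card_symdiff) (use assms in auto)
  then show "sumv ((S - T) \<union> (T - S)) i = vadd (sumv S) (sumv T) i"
    unfolding sumv_def vadd_def e by (rule par_aux)
qed

lemma card_vadd:
  "card {i. i < n \<and> vadd u v i \<and> X i} + 2 * card {i. i < n \<and> u i \<and> v i \<and> X i}
   = card {i. i < n \<and> u i \<and> X i} + card {i. i < n \<and> v i \<and> X i}"
proof -
  let ?A = "{i. i < n \<and> u i \<and> X i}" and ?B = "{i. i < n \<and> v i \<and> X i}"
  have e1: "{i. i < n \<and> vadd u v i \<and> X i} = (?A - ?B) \<union> (?B - ?A)" by (auto simp: vadd_def)
  have e2: "{i. i < n \<and> u i \<and> v i \<and> X i} = ?A \<inter> ?B" by auto
  show ?thesis unfolding e1 e2 by (rule card_symdiff) auto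
qed

lemma sumv_words: assumes "G \<subseteq> words n" "T \<subseteq> G" shows "sumv T \<in> words n"
proof -
  have "\<And>i. n \<le> i \<Longrightarrow> {g\<in>T. g i} = {}" using assms by (auto simp: words_def)
  then have "\<And>i. n \<le> i \<Longrightarrow> \<not> sumv T i" by (simp only: sumv_def card.empty) simp
  then show ?thesis by (auto simp: words_def)
qed

lemma span_linear: assumes "finite G" "G \<subseteq> words n"
  shows "linear_code n (sumv ` Pow G)"
  unfolding linear_code_def
proof (intro conjI ballI)
  show "sumv ` Pow G \<subseteq> words n" using sumv_words[OF assms(2)] by auto
  show "zero_vec \<in> sumv ` Pow G" using sumv_empty by (metis Pow_bottom imageI)
  fix u v assume "u \<in> sumv ` Pow G" "v \<in> sumv ` Pow G"
  then obtain S T where "S \<subseteq> G" "T \<subseteq> G" "u = sumv S" "v = sumv T" by auto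
  moreover have "finite S" "finite T" using calculation assms by (auto intro: finite_subset)
  ultimately have "vadd u v = sumv ((S - T) \<union> (T - S))" "(S - T) \<union> (T - S) \<in> Pow G"
    using sumv_symdiff by auto
  then show "vadd u v \<in> sumv ` Pow G" by (blast intro: image_eqI)
qed

lemma span_sub: assumes "linear_code n C" "finite T" "T \<subseteq> C" shows "sumv T \<in> C"
  using assms(2,3)
proof (induction T rule: finite_induct)
  case empty then show ?case using assms(1) by (simp add: sumv_empty linear_code_def)
next
  case (insert x F) then show ?case using assms(1) by (simp add: sumv_insert linear_code_def)
qed

definition indep :: "(nat \<Rightarrow> bool) set \<Rightarrow> bool" where
  "indep S \<longleftrightarrow> (\<forall>U\<subseteq>S. sumv U = zero_vec \<longrightarrow> U = {})"

lemma vadd_self: "vadd u u = zero_vec" by (simp add: vadd_def zero_vec_def)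

lemma indep_inj: assumes "finite S" "indep S" shows "inj_on sumv (Pow S)"
proof (rule inj_onI)
  fix T1 T2 assume "T1 \<in> Pow S" "T2 \<in> Pow S" "sumv T1 = sumv T2"
  moreover have "finite T1" "finite T2" using calculation assms by (auto intro: finite_subset)
  ultimately have "sumv ((T1 - T2) \<union> (T2 - T1)) = zero_vec" "(T1 - T2) \<union> (T2 - T1) \<subseteq> S"
    using sumv_symdiff vadd_self by auto
  then have "(T1 - T2) \<union> (T2 - T1) = {}" using assms(2) indep_def by blast
  then show "T1 = T2" by blast
qed

lemma indep_card: assumes "finite S" "indep S" shows "card (sumv ` Pow S) = 2 ^ card S"
  by (simp add: card_image[OF indep_inj[OF assms]] card_Pow assms(1))

lemma indep_ext: assumes "finite S" "indep S" "v \<notin> sumv ` Pow S"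
  shows "indep (insert v S)"
  unfolding indep_def
proof (intro allI impI)
  fix U assume U: "U \<subseteq> insert v S" "sumv U = zero_vec"
  have fU: "finite U" using U(1) assms(1) by (meson finite_insert finite_subset)
  show "U = {}"
  proof (cases "v \<in> U")
    case True
    have f: "finite (U - {v})" using fU by simp
    have "insert v (U - {v}) = U" using True by blast
    then have e: "sumv U = vadd v (sumv (U - {v}))"
      using sumv_insert[OF f, of v] by simp
    have "v i = sumv (U - {v}) i" for i
    proof -
      have "sumv U i = zero_vec i" using U(2) by simp
      then show ?thesis unfolding e by (simp add: vadd_def zero_vec_def)
    qed
    then have "v = sumv (U - {v})" by (rule ext)
    moreover have "U - {v} \<in> Pow S" using U by auto
    ultimately have "v \<in> sumv ` Pow S" by (rule image_eqI)
    then show ?thesis using assms(3) by contradiction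
  next
    case False
    then have "U \<subseteq> S" using U by blast
    then show ?thesis using U(2) assms(2) unfolding indep_def by blast
  qed
qed

lemma greedy:
  assumes lin: "linear_code n C" and fin: "finite C" and x0: "x0 \<in> C" "x0 \<noteq> zero_vec"
  shows "2 ^ Suc k \<le> card C \<Longrightarrow> \<exists>S\<subseteq>C. x0 \<in> S \<and> finite S \<and> card S = Suc k \<and> indep S"
proof (induction k)
  case 0
  have "indep {x0}" unfolding indep_def
  proof (intro allI impI)
    fix U assume U: "U \<subseteq> {x0}" "sumv U = zero_vec"
    show "U = {}"
    proof (rule ccontr)
      assume "U \<noteq> {}" then have "U = {x0}" using U(1) by blast
      then show False using U(2) x0(2) sumv_single[of x0] by simp
    qed
  qed
  moreover have "{x0} \<subseteq> C" "card {x0} = Suc 0" using x0 by simp_all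
  ultimately show ?case by blast
next
  case (Suc k)
  have "(2::nat) ^ Suc k < 2 ^ Suc (Suc k)" by simp
  then have lt: "2 ^ Suc k < card C" using Suc.prems by linarith
  then obtain S where S: "S \<subseteq> C" "x0 \<in> S" "finite S" "card S = Suc k" "indep S"
    using Suc.IH by fastforce
  have sub: "sumv ` Pow S \<subseteq> C"
  proof
    fix w assume "w \<in> sumv ` Pow S"
    then obtain T where T: "T \<subseteq> S" "w = sumv T" by auto
    then have "finite T" "T \<subseteq> C" using S(1,3) by (auto intro: finite_subset)
    then show "w \<in> C" using span_sub[OF lin] T(2) by simp
  qed
  have "card (sumv ` Pow S) = 2 ^ Suc k" using indep_card[OF S(3) S(5)] S(4) by simp
  then have "sumv ` Pow S \<noteq> C" using lt by auto
  then obtain v where v: "v \<in> C" "v \<notin> sumv ` Pow S" using sub by blast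
  have vS: "v \<notin> S"
  proof
    assume "v \<in> S" then have "sumv {v} \<in> sumv ` Pow S" by auto
    then show False using v(2) sumv_single by simp
  qed
  have "card (insert v S) = Suc (Suc k)" using card_insert_disjoint[OF S(3) vS] S(4) by simp
  moreover have "insert v S \<subseteq> C" "x0 \<in> insert v S" "finite (insert v S)" using S v by auto
  moreover have "indep (insert v S)" by (rule indep_ext[OF S(3) S(5) v(2)])
  ultimately show ?case by blast
qed

lemma de_lemma:
  assumes fin: "finite G"
    and ip: "\<forall>g\<in>G. \<forall>h\<in>G. even (card {i. i < n \<and> g i \<and> h i})"
    and w: "\<forall>g\<in>G. 4 dvd weight n g"
  shows "\<forall>T\<subseteq>G. 4 dvd weight n (sumv T)"
proof -
  have A: "finite T \<Longrightarrow> T \<subseteq> G \<Longrightarrow> g \<in> G \<Longrightarrow> even (card {i. i < n \<and> sumv T i \<and> g i})" for T g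
  proof (induction T rule: finite_induct)
    case empty then show ?case by (simp add: sumv_empty zero_vec_def)
  next
    case (insert x F)
    have xG: "x \<in> G" and FG: "F \<subseteq> G" using insert.prems by auto
    have c: "card {i. i < n \<and> vadd x (sumv F) i \<and> g i} + 2 * card {i. i < n \<and> x i \<and> sumv F i \<and> g i}
       = card {i. i < n \<and> x i \<and> g i} + card {i. i < n \<and> sumv F i \<and> g i}" by (rule card_vadd)
    have e1: "even (card {i. i < n \<and> x i \<and> g i})" using ip xG insert.prems(2) by blast
    have e2: "even (card {i. i < n \<and> sumv F i \<and> g i})" using insert.IH FG insert.prems(2) by blast
    have "even (card {i. i < n \<and> vadd x (sumv F) i \<and> g i})" by (rule ev_aux[OF c e1 e2])
    then show ?case unfolding sumv_insert[OF insert(1,2)] .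
  qed
  have B: "finite T \<Longrightarrow> T \<subseteq> G \<Longrightarrow> 4 dvd weight n (sumv T)" for T
  proof (induction T rule: finite_induct)
    case empty then show ?case by (simp add: sumv_empty zero_vec_def weight_def)
  next
    case (insert x F)
    have xG: "x \<in> G" and FG: "F \<subseteq> G" using insert.prems by auto
    have c: "card {i. i < n \<and> vadd x (sumv F) i \<and> True} + 2 * card {i. i < n \<and> x i \<and> sumv F i \<and> True}
           = card {i. i < n \<and> x i \<and> True} + card {i. i < n \<and> sumv F i \<and> True}" by (rule card_vadd)
    have s: "{i. i < n \<and> x i \<and> sumv F i} = {i. i < n \<and> sumv F i \<and> x i}" by blast
    have c2: "weight n (vadd x (sumv F)) + 2 * card {i. i < n \<and> sumv F i \<and> x i}
           = weight n x + weight n (sumv F)" using c unfolding weight_def s[symmetric] by simp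
    have e: "even (card {i. i < n \<and> sumv F i \<and> x i})" using A[OF insert(1) FG xG] .
    have d1: "4 dvd weight n x" using w xG by blast
    have d2: "4 dvd weight n (sumv F)" using insert.IH FG by blast
    show ?case unfolding sumv_insert[OF insert(1,2)] by (rule dvd4_aux[OF c2 d1 d2 e])
  qed
  show ?thesis
  proof (intro allI impI)
    fix T assume TG: "T \<subseteq> G"
    have "finite T" using TG fin by (auto intro: finite_subset)
    then show "4 dvd weight n (sumv T)" using TG B by blast
  qed
qed



definition rr :: "nat \<Rightarrow> nat \<Rightarrow> bool" where
  "rr m = (\<lambda>i. i < 32 \<and> even (i div 2 ^ m))"

lemma rows_eq: "RM15_rows = insert (ones_vec 32) (rr ` {0..4})"
  by (simp add: RM15_rows_def rr_def)

lemma four_cases: "(m::nat) \<in> {0..4} \<longleftrightarrow> m = 0 \<or> m = 1 \<or> m = 2 \<or> m = 3 \<or> m = 4"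
  by auto

lemma rr_31: "m \<in> {0..4} \<Longrightarrow> \<not> rr m 31"
  unfolding four_cases by (auto simp: rr_def)

lemma rr_pt: "m \<in> {0..4} \<Longrightarrow> m' \<in> {0..4} \<Longrightarrow> rr m' (31 - 2 ^ m) \<longleftrightarrow> m' = m"
  unfolding four_cases by (auto simp: rr_def)

lemma card32: "card {i. i < (32::nat) \<and> P i} = length (filter P [0..<32])"
proof -
  have "{i. i < (32::nat) \<and> P i} = set (filter P [0..<32])" by auto
  moreover have "card (set (filter P [0..<32])) = length (filter P [0..<32])"
    by (rule distinct_card) simp
  ultimately show ?thesis by simp
qed

lemma ip_rr: "m \<in> {0..4} \<Longrightarrow> m' \<in> {0..4} \<Longrightarrow>
  card {i. i < 32 \<and> rr m i \<and> rr m' i} = (if m = m' then 16 else 8)"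
  unfolding four_cases rr_def by (elim disjE; simp add: card32 upt_rec)

lemma w_rr: "m \<in> {0..4} \<Longrightarrow> card {i. i < 32 \<and> rr m i} = 16"
  unfolding four_cases rr_def by (elim disjE; simp add: card32 upt_rec)

lemma set04: "{0..4::nat} = {0,1,2,3,4}" by auto

lemma mod_bits: "(\<forall>m<k. even ((a::nat) div 2 ^ m) = even (b div 2 ^ m)) \<Longrightarrow> a mod 2 ^ k = b mod 2 ^ k"
proof (induction k)
  case 0 then show ?case by simp
next
  case (Suc k)
  have h: "a mod 2 ^ k = b mod 2 ^ k" using Suc by simp
  have "even (a div 2 ^ k) = even (b div 2 ^ k)" using Suc.prems by simp
  then have h2: "a div 2 ^ k mod 2 = b div 2 ^ k mod 2" by (simp add: mod2_eq_if)
  have p: "(2::nat) ^ Suc k = 2 ^ k * 2" by simp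
  have "a mod (2 ^ k * 2) = 2 ^ k * (a div 2 ^ k mod 2) + a mod 2 ^ k" by (rule mod_mult2_eq)
  moreover have "b mod (2 ^ k * 2) = 2 ^ k * (b div 2 ^ k mod 2) + b mod 2 ^ k" by (rule mod_mult2_eq)
  ultimately show ?case using h h2 unfolding p by simp
qed

lemma dist32: assumes "a < 32" "b < 32" "a \<noteq> (b::nat)" shows "\<exists>m\<in>{0..4}. rr m a \<noteq> rr m b"
proof (rule ccontr)
  assume "\<not> ?thesis"
  then have "\<forall>m<5. even (a div 2 ^ m) = even (b div 2 ^ m)" using assms by (auto simp: rr_def)
  then have "a mod 2 ^ 5 = b mod 2 ^ 5" by (rule mod_bits)
  then show False using assms by simp
qed

lemma tau_bits:
  fixes x :: "nat \<Rightarrow> bool"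
  shows "(if x 0 then 0 else 1) + (if x 1 then 0 else 2) + (if x 2 then 0 else 4) + (if x 3 then 0 else 8)
      + (if x 4 then 0 else (16::nat)) < 32 \<and>
    (\<forall>m\<in>{0..4}. even (((if x 0 then 0 else 1) + (if x 1 then 0 else 2) + (if x 2 then 0 else 4)
      + (if x 3 then 0 else 8) + (if x 4 then 0 else (16::nat))) div 2 ^ m) = x m)"
  unfolding set04 by (cases "x 0"; cases "x 1"; cases "x 2"; cases "x 3"; cases "x 4"; simp)

lemma ones_not_rr: "ones_vec 32 \<notin> rr ` {0..4}"
proof
  assume "ones_vec 32 \<in> rr ` {0..4}"
  then obtain m where m: "m \<in> {0..4}" "ones_vec 32 = rr m" by auto
  have "ones_vec 32 31" by (simp add: ones_vec_def)
  then have "rr m 31" using m(2) by simp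
  then show False using rr_31[OF m(1)] by simp
qed

lemma inj_rr: "inj_on rr {0..4}"
proof (rule inj_onI)
  fix m m' assume h: "m \<in> {0..4}" "m' \<in> {0..4}" "rr m = rr m'"
  have "rr m (31 - 2 ^ m)" using rr_pt[OF h(1) h(1)] by simp
  then have "rr m' (31 - 2 ^ m)" using h(3) by simp
  then show "m = m'" using rr_pt[OF h(1) h(2)] by simp
qed

lemma card_rows: "card RM15_rows = 6"
proof -
  have "card (rr ` {0..4}) = 5" using card_image[OF inj_rr] by simp
  then show ?thesis unfolding rows_eq using ones_not_rr by simp
qed

lemma fin_rows: "finite RM15_rows" unfolding rows_eq by simp

lemma rows_words: "RM15_rows \<subseteq> words 32"
  unfolding rows_eq by (auto simp: words_def ones_vec_def rr_def)

lemma indep_rows: "indep RM15_rows"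
  unfolding indep_def
proof (intro allI impI)
  fix U assume U: "U \<subseteq> RM15_rows" "sumv U = zero_vec"
  have z: "\<not> sumv U i" for i using U(2) by (simp add: zero_vec_def)
  have o: "ones_vec 32 \<notin> U"
  proof
    assume oU: "ones_vec 32 \<in> U"
    have "{g\<in>U. g 31} = {ones_vec 32}"
    proof (intro equalityI subsetI)
      fix g assume "g \<in> {g\<in>U. g 31}"
      then have "g \<in> RM15_rows" "g 31" using U(1) by auto
      then show "g \<in> {ones_vec 32}" unfolding rows_eq using rr_31 by auto
    next
      fix g assume "g \<in> {ones_vec 32}" then show "g \<in> {g\<in>U. g 31}" using oU by (simp add: ones_vec_def)
    qed
    then have "sumv U 31" by (simp add: sumv_def)
    then show False using z by blast
  qed
  have r: "rr m \<notin> U" if m: "m \<in> {0..4}" for m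
  proof
    assume rU: "rr m \<in> U"
    have "{g\<in>U. g (31 - 2 ^ m)} = {rr m}"
    proof (intro equalityI subsetI)
      fix g assume "g \<in> {g\<in>U. g (31 - 2 ^ m)}"
      then have g: "g \<in> RM15_rows" "g (31 - 2 ^ m)" "g \<noteq> ones_vec 32" using U(1) o by auto
      then obtain m' where m': "m' \<in> {0..4}" "g = rr m'" unfolding rows_eq by auto
      then have "m' = m" using rr_pt[OF m m'(1)] g(2) by simp
      then show "g \<in> {rr m}" using m' by simp
    next
      fix g assume "g \<in> {rr m}" then show "g \<in> {g\<in>U. g (31 - 2 ^ m)}" using rU rr_pt[OF m m] by simp
    qed
    then have "sumv U (31 - 2 ^ m)" by (simp add: sumv_def)
    then show False using z by blast
  qed
  show "U = {}"
  proof (rule ccontr)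
    assume "U \<noteq> {}"
    then obtain g where "g \<in> U" by blast
    then show False using U(1) o r unfolding rows_eq by auto
  qed
qed

lemma RM15_eq: "RM15 = sumv ` Pow RM15_rows"
  by (simp add: RM15_def span_eq)

lemma RM15_linear: "linear_code 32 RM15"
  unfolding RM15_eq by (rule span_linear[OF fin_rows rows_words])

lemma RM15_card: "card RM15 = 64"
  unfolding RM15_eq using indep_card[OF fin_rows indep_rows] card_rows by simp

lemma RM15_ones: "ones_vec 32 \<in> RM15"
proof -
  have "{ones_vec 32} \<in> Pow RM15_rows" unfolding rows_eq by simp
  then show ?thesis unfolding RM15_eq using sumv_single by (metis image_eqI)
qed

lemma RM15_rr: "m \<in> {0..4} \<Longrightarrow> rr m \<in> RM15"
proof -
  assume "m \<in> {0..4}"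
  then have "{rr m} \<in> Pow RM15_rows" unfolding rows_eq by simp
  then show ?thesis unfolding RM15_eq using sumv_single by (metis image_eqI)
qed

lemma ip_rows: "\<forall>g\<in>RM15_rows. \<forall>h\<in>RM15_rows. even (card {i. i < 32 \<and> g i \<and> h i})"
proof -
  have a: "card {i. i < 32 \<and> ones_vec 32 i \<and> ones_vec 32 i} = 32" by (simp add: ones_vec_def)
  have b: "m \<in> {0..4} \<Longrightarrow> card {i. i < 32 \<and> ones_vec 32 i \<and> rr m i} = 16" for m
  proof -
    assume m: "m \<in> {0..4}"
    have "{i. i < 32 \<and> ones_vec 32 i \<and> rr m i} = {i. i < 32 \<and> rr m i}" by (auto simp: ones_vec_def)
    then show ?thesis using w_rr[OF m] by simp
  qed
  have c: "m \<in> {0..4} \<Longrightarrow> card {i. i < 32 \<and> rr m i \<and> ones_vec 32 i} = 16" for m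
  proof -
    assume m: "m \<in> {0..4}"
    have "{i. i < 32 \<and> rr m i \<and> ones_vec 32 i} = {i. i < 32 \<and> rr m i}" by (auto simp: ones_vec_def)
    then show ?thesis using w_rr[OF m] by simp
  qed
  show ?thesis unfolding rows_eq using a b c ip_rr by auto
qed

lemma w_rows: "\<forall>g\<in>RM15_rows. 4 dvd weight 32 g"
proof -
  have a: "weight 32 (ones_vec 32) = 32" by (simp add: ones_vec_def weight_def)
  have b: "m \<in> {0..4} \<Longrightarrow> weight 32 (rr m) = 16" for m using w_rr by (simp add: weight_def)
  show ?thesis unfolding rows_eq using a b by auto
qed

lemma RM15_de: "doubly_even 32 RM15"
  unfolding doubly_even_def RM15_eq using de_lemma[OF fin_rows ip_rows w_rows] by auto

lemma RM15_dual: "min_weight_ge 32 (dual_code 32 RM15) 4"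
  unfolding min_weight_ge_def
proof (intro ballI impI)
  fix v assume v: "v \<in> dual_code 32 RM15" "v \<noteq> zero_vec"
  define A where "A = {i. i < 32 \<and> v i}"
  have vw: "v \<in> words 32" and vi: "\<forall>c\<in>RM15. inner_even 32 v c" using v(1) by (auto simp: dual_code_def)
  have fA: "finite A" unfolding A_def by simp
  have "A \<noteq> {}"
  proof
    assume "A = {}"
    then have "v i = False" for i using vw unfolding A_def words_def by (cases "i < 32") auto
    then have "v = zero_vec" by (auto simp: zero_vec_def)
    then show False using v(2) by simp
  qed
  then have c0: "card A \<noteq> 0" using fA by simp
  have "inner_even 32 v (ones_vec 32)" using vi RM15_ones by blast
  moreover have "{i. i < 32 \<and> v i \<and> ones_vec 32 i} = A" unfolding A_def by (auto simp: ones_vec_def)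
  ultimately have ev: "even (card A)" by (simp add: inner_even_def)
  have "card A \<noteq> 2"
  proof
    assume "card A = 2"
    then obtain a b where ab: "A = {a, b}" "a \<noteq> b" by (auto simp: card_2_iff)
    then have "a < 32" "b < 32" unfolding A_def by auto
    then obtain m where m: "m \<in> {0..4}" "rr m a \<noteq> rr m b" using dist32 ab(2) by blast
    have "inner_even 32 v (rr m)" using vi RM15_rr[OF m(1)] by blast
    moreover have "{i. i < 32 \<and> v i \<and> rr m i} = A \<inter> {i. rr m i}" unfolding A_def by auto
    moreover have "card (A \<inter> {i. rr m i}) = 1"
    proof (cases "rr m a")
      case True
      then have "A \<inter> {i. rr m i} = {a}" using m(2) ab by auto
      then show ?thesis by simp
    next
      case False
      then have "A \<inter> {i. rr m i} = {b}" using m(2) ab by auto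
      then show ?thesis by simp
    qed
    ultimately show False by (simp add: inner_even_def)
  qed
  then have "4 \<le> card A" using c0 ev by presburger
  then show "4 \<le> weight 32 v" unfolding weight_def A_def .
qed

lemma dist_B:
  assumes lin: "linear_code 32 B" and mw: "min_weight_ge 32 (dual_code 32 B) 4"
    and ij: "i < 32" "j < 32" "i \<noteq> j"
  shows "\<exists>c\<in>B. c i \<noteq> c j"
proof (rule ccontr)
  assume "\<not> ?thesis"
  then have eq: "\<forall>c\<in>B. c i = c j" by blast
  define e where "e = (\<lambda>k::nat. k = i \<or> k = j)"
  have ew: "e \<in> words 32" using ij by (auto simp: e_def words_def)
  have "inner_even 32 e c" if c: "c \<in> B" for c
  proof (cases "c i")
    case True
    then have "{k. k < 32 \<and> e k \<and> c k} = {i, j}" using eq c ij by (auto simp: e_def)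
    then show ?thesis using ij by (simp add: inner_even_def)
  next
    case False
    then have "{k. k < 32 \<and> e k \<and> c k} = {}" using eq c ij by (auto simp: e_def)
    then show ?thesis unfolding inner_even_def by (simp only: card.empty) simp
  qed
  then have "e \<in> dual_code 32 B" using ew by (auto simp: dual_code_def)
  moreover have "e \<noteq> zero_vec" by (auto simp: e_def zero_vec_def fun_eq_iff)
  ultimately have "4 \<le> weight 32 e" using mw by (auto simp: min_weight_ge_def)
  moreover have "{k. k < 32 \<and> e k} = {i, j}" using ij by (auto simp: e_def)
  ultimately show False using ij by (simp add: weight_def)
qed

lemma comp_inj: assumes "surj (tau::nat \<Rightarrow> nat)" shows "inj (\<lambda>v::nat \<Rightarrow> bool. v \<circ> tau)"
proof (rule injI)
  fix v w :: "nat \<Rightarrow> bool" assume h: "v \<circ> tau = w \<circ> tau"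
  show "v = w"
  proof
    fix x obtain y where "x = tau y" using assms by (metis surjD)
    then show "v x = w x" using fun_cong[OF h, of y] by simp
  qed
qed

lemma sumv_comp: assumes "surj tau" shows "sumv T \<circ> tau = sumv ((\<lambda>v. v \<circ> tau) ` T)"
proof
  fix i
  have "{h \<in> (\<lambda>v. v \<circ> tau) ` T. h i} = (\<lambda>v. v \<circ> tau) ` {g\<in>T. g (tau i)}" by auto
  moreover have "card ((\<lambda>v. v \<circ> tau) ` {g\<in>T. g (tau i)}) = card {g\<in>T. g (tau i)}"
    by (rule card_image) (rule inj_on_subset[OF comp_inj[OF assms]], simp)
  ultimately show "(sumv T \<circ> tau) i = sumv ((\<lambda>v. v \<circ> tau) ` T) i" by (simp add: sumv_def)
qed

lemma span_comp: assumes "surj tau"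
  shows "(\<lambda>v. v \<circ> tau) ` (sumv ` Pow G) = sumv ` Pow ((\<lambda>v. v \<circ> tau) ` G)"
proof -
  have "(\<lambda>v. v \<circ> tau) ` (sumv ` Pow G) = (\<lambda>T. sumv ((\<lambda>v. v \<circ> tau) ` T)) ` Pow G"
    unfolding image_image using sumv_comp[OF assms] by simp
  also have "\<dots> = sumv ` (image (\<lambda>v. v \<circ> tau) ` Pow G)" by (simp add: image_image)
  also have "\<dots> = sumv ` Pow ((\<lambda>v. v \<circ> tau) ` G)" by (simp add: image_Pow_surj)
  finally show ?thesis .
qed

lemma unique:
  assumes bc: "binary_code 32 6 B" and o: "ones_vec 32 \<in> B" and mw: "min_weight_ge 32 (dual_code 32 B) 4"
  shows "equiv_codes 32 RM15 B"
proof -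
  have lin: "linear_code 32 B" and cB: "card B = 64" using bc by (auto simp: binary_code_def)
  have fB: "finite B" using cB by (metis card.infinite zero_neq_numeral)
  have oz: "ones_vec 32 \<noteq> zero_vec"
  proof
    assume "ones_vec 32 = zero_vec"
    then have "ones_vec 32 0 = zero_vec 0" by simp
    then show False by (simp add: ones_vec_def zero_vec_def)
  qed
  obtain S where S: "S \<subseteq> B" "ones_vec 32 \<in> S" "finite S" "card S = Suc 5" "indep S"
    using greedy[OF lin fB o oz, of 5] cB by auto
  have sub: "sumv ` Pow S \<subseteq> B"
  proof
    fix w assume "w \<in> sumv ` Pow S"
    then obtain T where T: "T \<subseteq> S" "w = sumv T" by auto
    then have "finite T" "T \<subseteq> B" using S(1,3) by (auto intro: finite_subset)
    then show "w \<in> B" using span_sub[OF lin] T(2) by simp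
  qed
  have "card (sumv ` Pow S) = 64" using indep_card[OF S(3) S(5)] S(4) by simp
  then have spanB: "sumv ` Pow S = B" using card_subset_eq[OF fB sub] cB by simp
  define S' where "S' = S - {ones_vec 32}"
  have fS': "finite S'" and cS': "card S' = 5" using S(2,3,4) unfolding S'_def by auto
  obtain b where bb: "bij_betw b {0..<card S'} S'" using ex_bij_betw_nat_finite[OF fS'] by blast
  have bimg: "b ` {0..4} = S'"
  proof -
    have "{0..<card S'} = {0..4::nat}" unfolding cS' by auto
    then show ?thesis using bb by (simp add: bij_betw_def)
  qed
  have Seq: "S = insert (ones_vec 32) (b ` {0..4})" unfolding bimg S'_def using S(2) by auto
  have bw: "b m \<in> words 32" if "m \<in> {0..4}" for m
    using that bimg S(1) lin unfolding S'_def linear_code_def by blast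
  have bdist: "i = j" if ij: "i < 32" "j < 32" "\<forall>m\<in>{0..4}. b m i = b m j" for i j
  proof (rule ccontr)
    assume "i \<noteq> j"
    then obtain c where c: "c \<in> B" "c i \<noteq> c j" using dist_B[OF lin mw ij(1,2)] by blast
    then obtain T where T: "T \<subseteq> S" "c = sumv T" using spanB by auto
    have "g i = g j" if "g \<in> S" for g
      using that ij unfolding Seq by (auto simp: ones_vec_def)
    then have "{g\<in>T. g i} = {g\<in>T. g j}" using T(1) by auto
    then have "c i = c j" unfolding T(2) sumv_def by simp
    then show False using c(2) by simp
  qed
  define tau where "tau = (\<lambda>i. if i < 32 then (if b 0 i then 0 else 1) + (if b 1 i then 0 else 2)
      + (if b 2 i then 0 else 4) + (if b 3 i then 0 else 8) + (if b 4 i then 0 else (16::nat)) else i)"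
  have tb: "tau i < 32 \<and> (\<forall>m\<in>{0..4}. even (tau i div 2 ^ m) = b m i)" if "i < 32" for i
    using tau_bits[of "\<lambda>m. b m i"] that unfolding tau_def by simp
  have tout: "tau i = i" if "\<not> i < 32" for i using that unfolding tau_def by simp
  have injt: "inj_on tau {..<32}"
  proof (rule inj_onI)
    fix i j assume h: "i \<in> {..<32}" "j \<in> {..<32}" "tau i = tau j"
    then have "\<forall>m\<in>{0..4}. b m i = b m j" using tb[of i] tb[of j] by auto
    then show "i = j" using bdist h by auto
  qed
  have "tau ` {..<32} \<subseteq> {..<32}" using tb by auto
  then have "tau ` {..<32} = {..<32}" using endo_inj_surj[OF _ _ injt] by simp
  then have "bij_betw tau {..<32} {..<32}" using injt by (simp add: bij_betw_def)
  then have perm: "tau permutes {..<32}" by (rule bij_imp_permutes) (use tout in auto)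
  have surj: "surj tau" by (rule permutes_surj[OF perm])
  have rrt: "rr m \<circ> tau = b m" if m: "m \<in> {0..4}" for m
  proof
    fix i show "(rr m \<circ> tau) i = b m i"
    proof (cases "i < 32")
      case True then show ?thesis using tb[OF True] m by (auto simp: rr_def)
    next
      case False then show ?thesis using tout[OF False] bw[OF m] by (auto simp: rr_def words_def)
    qed
  qed
  have ot: "ones_vec 32 \<circ> tau = ones_vec 32"
  proof
    fix i show "(ones_vec 32 \<circ> tau) i = ones_vec 32 i"
      by (cases "i < 32") (use tb tout in \<open>auto simp: ones_vec_def\<close>)
  qed
  have "(\<lambda>v. v \<circ> tau) ` RM15_rows = S"
  proof -
    have "(\<lambda>m. rr m \<circ> tau) ` {0..4} = b ` {0..4}" using rrt by (rule image_cong[OF refl])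
    then show ?thesis unfolding rows_eq Seq image_insert image_image ot by simp
  qed
  then have "(\<lambda>v. v \<circ> tau) ` RM15 = B" unfolding RM15_eq span_comp[OF surj] using spanB by simp
  then show ?thesis unfolding equiv_codes_def using perm by blast
qed

theorem mainTheorem7:
  shows "binary_code 32 6 RM15 \<and> doubly_even 32 RM15 \<and> ones_vec 32 \<in> RM15
           \<and> min_weight_ge 32 (dual_code 32 RM15) 4
         \<and> (\<forall>B. binary_code 32 6 B \<and> doubly_even 32 B \<and> ones_vec 32 \<in> B
               \<and> min_weight_ge 32 (dual_code 32 B) 4 \<longrightarrow> equiv_codes 32 RM15 B)"
  using RM15_linear RM15_card RM15_de RM15_ones RM15_dual unique
  by (auto simp: binary_code_def)

end
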